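(* Let $\{x,\xi\}$ be a line congruence, where $x:U\to\mathbb{R}^3$ is smooth, $U\subset\mathbb{R}^2$ open, and $\xi:U\to S^2$ is a proper frontal. Let $\Omega=(w_1\ w_2)$ be a tangent moving basis of $\xi$ and write $D\xi=\Omega\Delta_\Omega^T$ with $\Delta_\Omega=(\delta_{ij})$. \begin{enumerate} \item A curve $(u_1(t),u_2(t))$ in $U$ is a Kummer principal line if and only if it is a solution of \[ C_1 b_1^2 + C_2 b_1 b_2 + C_3 b_2^2 = 0 \quad\text{for all } t, \] where $\begin{pmatrix} b_1\\ b_2\end{pmatrix}=\Delta_\Omega^T\begin{pmatrix} u_1'\\ u_2'\end{pmatrix}$ and \begin{align*} C_1 &= 2\mathscr{F}_\Omega(\delta_{22}\mathscr{L}_\Omega-\delta_{12}\mathscr{M}_{1\Omega}) - \mathscr{E}_\Omega(\delta_{11}\mathscr{M}_{1\Omega}-\delta_{21}\mathscr{L}_\Omega+\delta_{22}\mathscr{M}_{2\Omega}-\delta_{12}\mathscr{N}_\Omega),\\ C_2 &= 2\mathscr{G}_\Omega(\delta_{22}\mathscr{L}_\Omega-\delta_{12}\mathscr{M}_{1\Omega}) - 2\mathscr{E}_\Omega(\delta_{11}\mathscr{N}_\Omega-\delta_{21}\mathscr{M}_{2\Omega}),\\ C_3 &= \mathscr{G}_\Omega(\delta_{11}\mathscr{M}_{1\Omega}-\delta_{21}\mathscr{L}_\Omega+\delta_{22}\mathscr{M}_{2\Omega}-\delta_{12}\mathscr{N}_\Omega) - 2\mathscr{F}_\Omega(\delta_{11}\mathscr{N}_\Omega-\delta_{21}\mathscr{M}_{2\Omega}).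 \end{align*} This equation is called the equation of principal surfaces of the congruence. \item If the congruence is normal, then the equation of principal surfaces can be written as \[ \begin{pmatrix} u_1' & u_2'\end{pmatrix}\Delta_\Omega\,\mathbf{P}\,\mathrm{adj}(\bm{\mathcal{II}}_\Omega)^T\Delta_\Omega\bm{\mathcal{I}}_\Omega\Delta_\Omega^T\begin{pmatrix} u_1'\\ u_2'\end{pmatrix}=0,\qquad \mathbf{P}=\begin{pmatrix}0&1\\-1&0\end{pmatrix}. \] \end{enumerate}
   Context: A frontal is a smooth map $\xi:U\to\mathbb{R}^3$ admitting locally a unit normal vector field; it is proper if its singular set $\Sigma(\xi)$ has empty interior. A tangent moving basis of $\xi$ is a smooth map $\Omega=(w_1\ w_2):U\to M_{3\times2}(\mathbb{R})$ with linearly independent columns such that $\xi_{u_1},\xi_{u_2}\in\mathrm{span}(w_1,w_2)=P_\Omega$; then $D\xi=\Omega\Delta_\Omega^T$ for a unique $\Delta_\Omega:U\to M_{2\times2}(\mathbb{R})$. The $\Omega$-Kummer fundamental forms have coefficients $\mathscr{E}_\Omega=\langle w_1,w_1\rangle$, $\mathscr{F}_\Omega=\langle w_1,w_2\rangle$, $\mathscr{G}_\Omega=\langle w_2,w_2\rangle$ (matrix $\bm{\mathcal{I}}_\Omega=\Omega^T\Omega$), and $\mathscr{L}_\Omega=-\langle x_{u_1},w_1\rangle$, $\mathscr{M}_{2\Omega}=-\langle x_{u_1},w_2\rangle$, $\mathscr{M}_{1\Omega}=-\langle x_{u_2},w_1\rangle$, $\mathscr{N}_\Omega=-\langle x_{u_2},w_2\rangle$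 (matrix $\bm{\mathcal{II}}_\Omega=-\Omega^TDx$). For $q\in U$ define $\mathscr{K}_q^\Omega(b_1,b_2)=\dfrac{b^T\bm{\mathcal{II}}_\Omega\,\mathrm{adj}(\Delta_\Omega^T)b}{b^T\bm{\mathcal{I}}_\Omega b}$, $b=(b_1,b_2)^T$, $\mathrm{adj}$ the adjugate matrix. A direction $b_1w_1+b_2w_2\in P_\Omega$ is a Kummer principal direction if $\mathscr{K}_q^\Omega(b_1,b_2)$ is an extreme value of $\mathscr{K}_q^\Omega$. For a smooth curve $\alpha(t)=(u_1(t),u_2(t))$ in $U$, the ruled surface $Y(t,v)=x(\alpha(t))+v\xi(\alpha(t))$ is a principal surface if for every $t$ with $(b_1,b_2)^T=\Delta_\Omega^T(u_1',u_2')^T\neq 0$, $(b_1,b_2)$ determines a Kummer principal direction; $\alpha$ (or the directrix curve) is then called a Kummer principal line. The congruence is normal if there is a surface whose normal lines are parallel to the lines of the congruence; equivalently, $\bm{\mathcal{II}}_\Omega\,\mathrm{adj}(\Delta_\Omega^T)$ is symmetric. *)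

theory Defs
  imports "HOL-Analysis.Analysis"
begin

fun Ck_on :: "nat \<Rightarrow> 'a::euclidean_space set \<Rightarrow> ('a \<Rightarrow> 'b::real_normed_vector) \<Rightarrow> bool" where
  "Ck_on 0 S f = continuous_on S f"
| "Ck_on (Suc k) S f =
     (continuous_on S f \<and> (\<forall>q\<in>S. f differentiable (at q)) \<and>
      (\<forall>i\<in>Basis. Ck_on k S (\<lambda>q. frechet_derivative f (at q) i)))"

definition smooth_on :: "'a::euclidean_space set \<Rightarrow> ('a \<Rightarrow> 'b::real_normed_vector) \<Rightarrow> bool" where
  "smooth_on S f \<longleftrightarrow> (\<forall>k. Ck_on k S f)"

definition jac :: "(real^2 \<Rightarrow> real^3) \<Rightarrow> real^2 \<Rightarrow> real^2^3" where
  "jac f q = matrix (frechet_derivative f (at q))"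

definition du :: "(real^2 \<Rightarrow> real^3) \<Rightarrow> 2 \<Rightarrow> real^2 \<Rightarrow> real^3" where
  "du f i q = frechet_derivative f (at q) (axis i 1)"

definition adj2 :: "real^2^2 \<Rightarrow> real^2^2" where
  "adj2 A = vector [vector [A$2$2, - A$1$2], vector [- A$2$1, A$1$1]]"

definition Pmat :: "real^2^2" where
  "Pmat = vector [vector [0, 1], vector [-1, 0]]"

definition singular_set :: "(real^2) set \<Rightarrow> (real^2 \<Rightarrow> real^3) \<Rightarrow> (real^2) set" where
  "singular_set U f = {q\<in>U. rank (jac f q) < 2}"

definition frontal :: "(real^2) set \<Rightarrow> (real^2 \<Rightarrow> real^3) \<Rightarrow> bool" where
  "frontal U f \<longleftrightarrow> smooth_on U f \<and>
     (\<forall>q\<in>U. \<exists>V \<nu>. open V \<and> q \<in> V \<and> V \<subseteq> U \<and> smooth_on V \<nu> \<and>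
        (\<forall>p\<in>V. norm (\<nu> p) = 1 \<and> \<nu> p \<bullet> du f 1 p = 0 \<and> \<nu> p \<bullet> du f 2 p = 0))"

definition proper_frontal :: "(real^2) set \<Rightarrow> (real^2 \<Rightarrow> real^3) \<Rightarrow> bool" where
  "proper_frontal U f \<longleftrightarrow> frontal U f \<and> interior (singular_set U f) = {}"

definition line_congruence :: "(real^2) set \<Rightarrow> (real^2 \<Rightarrow> real^3) \<Rightarrow> (real^2 \<Rightarrow> real^3) \<Rightarrow> bool" where
  "line_congruence U x \<xi> \<longleftrightarrow> open U \<and> smooth_on U x \<and> (\<forall>q\<in>U. norm (\<xi> q) = 1) \<and>
     proper_frontal U \<xi>"

definition w1 :: "(real^2 \<Rightarrow> real^2^3) \<Rightarrow> real^2 \<Rightarrow> real^3" where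
  "w1 \<Omega> q = column 1 (\<Omega> q)"

definition w2 :: "(real^2 \<Rightarrow> real^2^3) \<Rightarrow> real^2 \<Rightarrow> real^3" where
  "w2 \<Omega> q = column 2 (\<Omega> q)"

definition tangent_moving_basis :: "(real^2) set \<Rightarrow> (real^2 \<Rightarrow> real^3) \<Rightarrow> (real^2 \<Rightarrow> real^2^3) \<Rightarrow> bool" where
  "tangent_moving_basis U \<xi> \<Omega> \<longleftrightarrow> smooth_on U \<Omega> \<and>
     (\<forall>q\<in>U. (\<forall>c1 c2. c1 *\<^sub>R w1 \<Omega> q + c2 *\<^sub>R w2 \<Omega> q = 0 \<longrightarrow> c1 = 0 \<and> c2 = 0) \<and>
            du \<xi> 1 q \<in> span {w1 \<Omega> q, w2 \<Omega> q} \<and> du \<xi> 2 q \<in> span {w1 \<Omega> q, w2 \<Omega> q})"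

definition kE :: "(real^2 \<Rightarrow> real^2^3) \<Rightarrow> real^2 \<Rightarrow> real" where
  "kE \<Omega> q = w1 \<Omega> q \<bullet> w1 \<Omega> q"
definition kF :: "(real^2 \<Rightarrow> real^2^3) \<Rightarrow> real^2 \<Rightarrow> real" where
  "kF \<Omega> q = w1 \<Omega> q \<bullet> w2 \<Omega> q"
definition kG :: "(real^2 \<Rightarrow> real^2^3) \<Rightarrow> real^2 \<Rightarrow> real" where
  "kG \<Omega> q = w2 \<Omega> q \<bullet> w2 \<Omega> q"
definition kL :: "(real^2 \<Rightarrow> real^2^3) \<Rightarrow> (real^2 \<Rightarrow> real^3) \<Rightarrow> real^2 \<Rightarrow> real" where
  "kL \<Omega> x q = - (du x 1 q \<bullet> w1 \<Omega> q)"
definition kM2 :: "(real^2 \<Rightarrow> real^2^3) \<Rightarrow> (real^2 \<Rightarrow> real^3) \<Rightarrow> real^2 \<Rightarrow> real" where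
  "kM2 \<Omega> x q = - (du x 1 q \<bullet> w2 \<Omega> q)"
definition kM1 :: "(real^2 \<Rightarrow> real^2^3) \<Rightarrow> (real^2 \<Rightarrow> real^3) \<Rightarrow> real^2 \<Rightarrow> real" where
  "kM1 \<Omega> x q = - (du x 2 q \<bullet> w1 \<Omega> q)"
definition kN :: "(real^2 \<Rightarrow> real^2^3) \<Rightarrow> (real^2 \<Rightarrow> real^3) \<Rightarrow> real^2 \<Rightarrow> real" where
  "kN \<Omega> x q = - (du x 2 q \<bullet> w2 \<Omega> q)"

definition kI :: "(real^2 \<Rightarrow> real^2^3) \<Rightarrow> real^2 \<Rightarrow> real^2^2" where
  "kI \<Omega> q = transpose (\<Omega> q) ** \<Omega> q"
definition kII :: "(real^2 \<Rightarrow> real^2^3) \<Rightarrow> (real^2 \<Rightarrow> real^3) \<Rightarrow> real^2 \<Rightarrow> real^2^2" where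
  "kII \<Omega> x q = - (transpose (\<Omega> q) ** jac x q)"

definition kummerK :: "(real^2 \<Rightarrow> real^2^3) \<Rightarrow> (real^2 \<Rightarrow> real^2^2) \<Rightarrow> (real^2 \<Rightarrow> real^3) \<Rightarrow> real^2 \<Rightarrow> real^2 \<Rightarrow> real" where
  "kummerK \<Omega> \<Delta> x q b =
     (b \<bullet> ((kII \<Omega> x q ** adj2 (transpose (\<Delta> q))) *v b)) / (b \<bullet> (kI \<Omega> q *v b))"

definition kummer_principal_direction :: "(real^2 \<Rightarrow> real^2^3) \<Rightarrow> (real^2 \<Rightarrow> real^2^2) \<Rightarrow> (real^2 \<Rightarrow> real^3) \<Rightarrow> real^2 \<Rightarrow> real^2 \<Rightarrow> bool" where
  "kummer_principal_direction \<Omega> \<Delta> x q b \<longleftrightarrow> b \<noteq> 0 \<and>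
     ((\<forall>c. c \<noteq> 0 \<longrightarrow> kummerK \<Omega> \<Delta> x q c \<le> kummerK \<Omega> \<Delta> x q b) \<or>
      (\<forall>c. c \<noteq> 0 \<longrightarrow> kummerK \<Omega> \<Delta> x q b \<le> kummerK \<Omega> \<Delta> x q c))"

text \<open>A curve alpha : J -> U is a Kummer principal line (the ruled surface
  Y(t,v) = x(alpha t) + v xi(alpha t) is a principal surface).\<close>
definition kummer_principal_line :: "(real^2 \<Rightarrow> real^2^3) \<Rightarrow> (real^2 \<Rightarrow> real^2^2) \<Rightarrow> (real^2 \<Rightarrow> real^3) \<Rightarrow> real set \<Rightarrow> (real \<Rightarrow> real^2) \<Rightarrow> bool" where
  "kummer_principal_line \<Omega> \<Delta> x J \<alpha> \<longleftrightarrow>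
     (\<forall>t\<in>J. transpose (\<Delta> (\<alpha> t)) *v vector_derivative \<alpha> (at t) \<noteq> 0 \<longrightarrow>
        kummer_principal_direction \<Omega> \<Delta> x (\<alpha> t) (transpose (\<Delta> (\<alpha> t)) *v vector_derivative \<alpha> (at t)))"

definition C1 :: "(real^2 \<Rightarrow> real^2^3) \<Rightarrow> (real^2 \<Rightarrow> real^2^2) \<Rightarrow> (real^2 \<Rightarrow> real^3) \<Rightarrow> real^2 \<Rightarrow> real" where
  "C1 \<Omega> \<Delta> x q =
     2 * kF \<Omega> q * (\<Delta> q$2$2 * kL \<Omega> x q - \<Delta> q$1$2 * kM1 \<Omega> x q)
     - kE \<Omega> q * (\<Delta> q$1$1 * kM1 \<Omega> x q - \<Delta> q$2$1 * kL \<Omega> x q + \<Delta> q$2$2 * kM2 \<Omega> x q - \<Delta> q$1$2 * kN \<Omega> x q)"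

definition C2 :: "(real^2 \<Rightarrow> real^2^3) \<Rightarrow> (real^2 \<Rightarrow> real^2^2) \<Rightarrow> (real^2 \<Rightarrow> real^3) \<Rightarrow> real^2 \<Rightarrow> real" where
  "C2 \<Omega> \<Delta> x q =
     2 * kG \<Omega> q * (\<Delta> q$2$2 * kL \<Omega> x q - \<Delta> q$1$2 * kM1 \<Omega> x q)
     - 2 * kE \<Omega> q * (\<Delta> q$1$1 * kN \<Omega> x q - \<Delta> q$2$1 * kM2 \<Omega> x q)"

definition C3 :: "(real^2 \<Rightarrow> real^2^3) \<Rightarrow> (real^2 \<Rightarrow> real^2^2) \<Rightarrow> (real^2 \<Rightarrow> real^3) \<Rightarrow> real^2 \<Rightarrow> real" where
  "C3 \<Omega> \<Delta> x q =
     kG \<Omega> q * (\<Delta> q$1$1 * kM1 \<Omega> x q - \<Delta> q$2$1 * kL \<Omega> x q + \<Delta> q$2$2 * kM2 \<Omega> x q - \<Delta> q$1$2 * kN \<Omega> x q)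
     - 2 * kF \<Omega> q * (\<Delta> q$1$1 * kN \<Omega> x q - \<Delta> q$2$1 * kM2 \<Omega> x q)"

definition principal_eq :: "(real^2 \<Rightarrow> real^2^3) \<Rightarrow> (real^2 \<Rightarrow> real^2^2) \<Rightarrow> (real^2 \<Rightarrow> real^3) \<Rightarrow> real^2 \<Rightarrow> real^2 \<Rightarrow> real" where
  "principal_eq \<Omega> \<Delta> x q b =
     C1 \<Omega> \<Delta> x q * (b$1)^2 + C2 \<Omega> \<Delta> x q * (b$1 * b$2) + C3 \<Omega> \<Delta> x q * (b$2)^2"

text \<open>Normal congruence, via its characterisation: II_Omega adj(Delta_Omega^T) symmetric.\<close>
definition normal_congruence :: "(real^2) set \<Rightarrow> (real^2 \<Rightarrow> real^2^3) \<Rightarrow> (real^2 \<Rightarrow> real^2^2) \<Rightarrow> (real^2 \<Rightarrow> real^3) \<Rightarrow> bool" where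
  "normal_congruence U \<Omega> \<Delta> x \<longleftrightarrow>
     (\<forall>q\<in>U. transpose (kII \<Omega> x q ** adj2 (transpose (\<Delta> q))) = kII \<Omega> x q ** adj2 (transpose (\<Delta> q)))"

end

theory Submission
  imports Defs
begin


lemma semidef_null:
  fixes p q r b1 b2 :: real
  assumes le: "\<And>c1 c2. p*c1^2 + 2*q*c1*c2 + r*c2^2 \<le> 0"
    and z: "p*b1^2 + 2*q*b1*b2 + r*b2^2 = 0"
  shows "p*b1 + q*b2 = 0 \<and> q*b1 + r*b2 = 0"
proof -
  have p: "p \<le> 0" using le[of 1 0] by simp
  have r: "r \<le> 0" using le[of 0 1] by simp
  have d: "p*r - q^2 \<ge> 0"
  proof (cases "p = 0")
    case True
    have "q = 0"
    proof (rule ccontr)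
      assume "q \<noteq> 0"
      have "p*((1-r)/(2*q))^2 + 2*q*((1-r)/(2*q))*1 + r*1^2 = 1"
        using True \<open>q \<noteq> 0\<close> by (simp add: field_simps)
      with le[of "(1-r)/(2*q)" 1] show False by simp
    qed
    then show ?thesis using True by simp
  next
    case False
    have "p*q^2 + 2*q*q*(-p) + r*(-p)^2 \<le> 0" using le[of q "-p"] .
    then have "p*(p*r - q^2) \<le> 0" by (simp add: power2_eq_square algebra_simps)
    moreover have "p < 0" using False p by simp
    ultimately show ?thesis using mult_neg_neg[of p "p*r-q^2"] by linarith
  qed
  have e1: "p*(p*b1^2 + 2*q*b1*b2 + r*b2^2) = (p*b1+q*b2)^2 + (p*r-q^2)*b2^2"
    by (simp add: power2_eq_square algebra_simps)
  have e2: "r*(p*b1^2 + 2*q*b1*b2 + r*b2^2) = (q*b1+r*b2)^2 + (p*r-q^2)*b1^2"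
    by (simp add: power2_eq_square algebra_simps)
  have d1: "(p*r-q^2)*b2^2 \<ge> 0" using d by simp
  have d2: "(p*r-q^2)*b1^2 \<ge> 0" using d by simp
  have s1: "(p*b1+q*b2)^2 + (p*r-q^2)*b2^2 = 0" using e1 z by simp
  have s2: "(q*b1+r*b2)^2 + (p*r-q^2)*b1^2 = 0" using e2 z by simp
  have "(p*b1+q*b2)^2 = 0" using s1 d1 zero_le_power2[of "p*b1+q*b2"] by linarith
  moreover have "(q*b1+r*b2)^2 = 0" using s2 d2 zero_le_power2[of "q*b1+r*b2"] by linarith
  ultimately show ?thesis by simp
qed

lemma key_real:
  fixes a h d E F G b1 b2 :: real
  defines "Q \<equiv> \<lambda>c1 c2. a*c1^2 + h*c1*c2 + d*c2^2"
    and "R \<equiv> \<lambda>c1 c2. E*c1^2 + 2*F*c1*c2 + G*c2^2"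
  assumes pos: "\<And>c1 c2. (c1 \<noteq> 0 \<or> c2 \<noteq> 0) \<Longrightarrow> R c1 c2 > 0" and b: "b1 \<noteq> 0 \<or> b2 \<noteq> 0"
  shows "((\<forall>c1 c2. (c1 \<noteq> 0 \<or> c2 \<noteq> 0) \<longrightarrow> Q c1 c2 / R c1 c2 \<le> Q b1 b2 / R b1 b2) \<or>
          (\<forall>c1 c2. (c1 \<noteq> 0 \<or> c2 \<noteq> 0) \<longrightarrow> Q b1 b2 / R b1 b2 \<le> Q c1 c2 / R c1 c2))
     \<longleftrightarrow> (2*F*a - E*h)*b1^2 + (2*G*a - 2*E*d)*(b1*b2) + (G*h - 2*F*d)*b2^2 = 0"
proof -
  define k where "k = Q b1 b2 / R b1 b2"
  define p where "p = a - k*E"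
  define q where "q = h/2 - k*F"
  define r where "r = d - k*G"
  define f where "f = (\<lambda>c1 c2. p*c1^2 + 2*q*c1*c2 + r*c2^2)"
  define m1 where "m1 = p*b1 + q*b2"
  define m2 where "m2 = q*b1 + r*b2"
  have Rb: "R b1 b2 > 0" using pos b by blast
  have fQ: "f c1 c2 = Q c1 c2 - k * R c1 c2" for c1 c2
    unfolding f_def p_def q_def r_def Q_def R_def by (simp add: algebra_simps)
  have fb: "f b1 b2 = 0" using fQ[of b1 b2] Rb unfolding k_def by simp
  have le_iff: "Q c1 c2 / R c1 c2 \<le> k \<longleftrightarrow> f c1 c2 \<le> 0" if "c1 \<noteq> 0 \<or> c2 \<noteq> 0" for c1 c2
    using pos[OF that] fQ[of c1 c2] by (simp add: pos_divide_le_eq)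
  have ge_iff: "k \<le> Q c1 c2 / R c1 c2 \<longleftrightarrow> f c1 c2 \<ge> 0" if "c1 \<noteq> 0 \<or> c2 \<noteq> 0" for c1 c2
    using pos[OF that] fQ[of c1 c2] by (simp add: pos_le_divide_eq)
  have pe: "(2*F*a - E*h)*b1^2 + (2*G*a - 2*E*d)*(b1*b2) + (G*h - 2*F*d)*b2^2
      = 2*(m1*(F*b1 + G*b2) - m2*(E*b1 + F*b2))"
    unfolding m1_def m2_def p_def q_def r_def by (simp add: power2_eq_square field_simps)
  have bm: "b1*m1 + b2*m2 = f b1 b2"
    unfolding m1_def m2_def f_def by (simp add: power2_eq_square algebra_simps)
  have bn: "b1*(E*b1 + F*b2) + b2*(F*b1 + G*b2) = R b1 b2"
    unfolding R_def by (simp add: power2_eq_square algebra_simps)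
  show ?thesis
  proof
    assume H: "(\<forall>c1 c2. (c1 \<noteq> 0 \<or> c2 \<noteq> 0) \<longrightarrow> Q c1 c2 / R c1 c2 \<le> Q b1 b2 / R b1 b2) \<or>
          (\<forall>c1 c2. (c1 \<noteq> 0 \<or> c2 \<noteq> 0) \<longrightarrow> Q b1 b2 / R b1 b2 \<le> Q c1 c2 / R c1 c2)"
    have "m1 = 0 \<and> m2 = 0"
      using H
    proof
      assume A: "\<forall>c1 c2. (c1 \<noteq> 0 \<or> c2 \<noteq> 0) \<longrightarrow> Q c1 c2 / R c1 c2 \<le> Q b1 b2 / R b1 b2"
      have "f c1 c2 \<le> 0" for c1 c2
      proof (cases "c1 \<noteq> 0 \<or> c2 \<noteq> 0")
        case True then show ?thesis using A le_iff k_def by blast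
      next
        case False then show ?thesis by (simp add: f_def)
      qed
      then show ?thesis using semidef_null[of p q r b1 b2] fb
        unfolding f_def m1_def m2_def by blast
    next
      assume A: "\<forall>c1 c2. (c1 \<noteq> 0 \<or> c2 \<noteq> 0) \<longrightarrow> Q b1 b2 / R b1 b2 \<le> Q c1 c2 / R c1 c2"
      have "f c1 c2 \<ge> 0" for c1 c2
      proof (cases "c1 \<noteq> 0 \<or> c2 \<noteq> 0")
        case True then show ?thesis using A ge_iff k_def by blast
      next
        case False then show ?thesis by (simp add: f_def)
      qed
      then have "(-p)*c1^2 + 2*(-q)*c1*c2 + (-r)*c2^2 \<le> 0" for c1 c2
      proof -
        have "(-p)*c1^2 + 2*(-q)*c1*c2 + (-r)*c2^2 = - f c1 c2" unfolding f_def by (simp add: algebra_simps)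
        then show ?thesis using \<open>f c1 c2 \<ge> 0\<close> by linarith
      qed
      moreover have "(-p)*b1^2 + 2*(-q)*b1*b2 + (-r)*b2^2 = 0" using fb unfolding f_def by simp
      ultimately have "(-p)*b1 + (-q)*b2 = 0 \<and> (-q)*b1 + (-r)*b2 = 0"
        using semidef_null by blast
      then show ?thesis unfolding m1_def m2_def by simp
    qed
    then show "(2*F*a - E*h)*b1^2 + (2*G*a - 2*E*d)*(b1*b2) + (G*h - 2*F*d)*b2^2 = 0"
      using pe by simp
  next
    assume "(2*F*a - E*h)*b1^2 + (2*G*a - 2*E*d)*(b1*b2) + (G*h - 2*F*d)*b2^2 = 0"
    then have c: "m1*(F*b1 + G*b2) = m2*(E*b1 + F*b2)" using pe by simp
    have m10: "m1 = 0"
    proof -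
      have e: "m1 * R b1 b2 - (E*b1 + F*b2) * (b1*m1 + b2*m2) = b2*(m1*(F*b1 + G*b2) - m2*(E*b1 + F*b2))"
        unfolding bn[symmetric] by (simp add: algebra_simps)
      have "m1 * R b1 b2 = (E*b1 + F*b2) * (b1*m1 + b2*m2)"
        using e c by simp
      then show ?thesis using bm fb Rb by simp
    qed
    have m20: "m2 = 0"
    proof -
      have e: "m2 * R b1 b2 - (F*b1 + G*b2) * (b1*m1 + b2*m2) = - b1*(m1*(F*b1 + G*b2) - m2*(E*b1 + F*b2))"
        unfolding bn[symmetric] by (simp add: algebra_simps)
      have "m2 * R b1 b2 = (F*b1 + G*b2) * (b1*m1 + b2*m2)"
        using e c by simp
      then show ?thesis using bm fb Rb by simp
    qed
    have "(p*r - q^2)*b1 = r*m1 - q*m2" unfolding m1_def m2_def by (simp add: power2_eq_square algebra_simps)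
    moreover have "(p*r - q^2)*b2 = p*m2 - q*m1" unfolding m1_def m2_def by (simp add: power2_eq_square algebra_simps)
    ultimately have det: "p*r - q^2 = 0" using m10 m20 b by auto
    have pf: "p * f c1 c2 = (p*c1 + q*c2)^2" for c1 c2
    proof -
      have "p * f c1 c2 = (p*c1 + q*c2)^2 + (p*r - q^2)*c2^2"
        unfolding f_def by (simp add: power2_eq_square algebra_simps)
      then show ?thesis using det by simp
    qed
    have rf: "r * f c1 c2 = (q*c1 + r*c2)^2" for c1 c2
    proof -
      have "r * f c1 c2 = (q*c1 + r*c2)^2 + (p*r - q^2)*c1^2"
        unfolding f_def by (simp add: power2_eq_square algebra_simps)
      then show ?thesis using det by simp
    qed
    have "(\<forall>c1 c2. f c1 c2 \<le> 0) \<or> (\<forall>c1 c2. f c1 c2 \<ge> 0)"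
    proof (cases "p < 0 \<or> r < 0")
      case True
      have "f c1 c2 \<le> 0" for c1 c2
      proof (rule ccontr)
        assume "\<not> f c1 c2 \<le> 0" then have fp: "f c1 c2 > 0" by simp
        from True show False
        proof
          assume "p < 0" then have "p * f c1 c2 < 0" using fp by (simp add: mult_neg_pos)
          then show False using pf[of c1 c2] zero_le_power2[of "p*c1+q*c2"] by linarith
        next
          assume "r < 0" then have "r * f c1 c2 < 0" using fp by (simp add: mult_neg_pos)
          then show False using rf[of c1 c2] zero_le_power2[of "q*c1+r*c2"] by linarith
        qed
      qed
      then show ?thesis by blast
    next
      case False
      show ?thesis
      proof (cases "p > 0 \<or> r > 0")
        case True
        have "f c1 c2 \<ge> 0" for c1 c2
        proof (rule ccontr)
          assume "\<not> f c1 c2 \<ge> 0" then have fp: "f c1 c2 < 0" by simp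
          from True show False
          proof
            assume "p > 0" then have "p * f c1 c2 < 0" using fp by (simp add: mult_pos_neg)
            then show False using pf[of c1 c2] zero_le_power2[of "p*c1+q*c2"] by linarith
          next
            assume "r > 0" then have "r * f c1 c2 < 0" using fp by (simp add: mult_pos_neg)
            then show False using rf[of c1 c2] zero_le_power2[of "q*c1+r*c2"] by linarith
          qed
        qed
        then show ?thesis by blast
      next
        case False2: False
        then have "p = 0" "r = 0" using False by auto
        then have "q = 0" using det by simp
        then show ?thesis using \<open>p = 0\<close> \<open>r = 0\<close> by (simp add: f_def)
      qed
    qed
    then show "(\<forall>c1 c2. (c1 \<noteq> 0 \<or> c2 \<noteq> 0) \<longrightarrow> Q c1 c2 / R c1 c2 \<le> Q b1 b2 / R b1 b2) \<or>
          (\<forall>c1 c2. (c1 \<noteq> 0 \<or> c2 \<noteq> 0) \<longrightarrow> Q b1 b2 / R b1 b2 \<le> Q c1 c2 / R c1 c2)"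
      using le_iff ge_iff unfolding k_def by blast
  qed
qed



lemma quad2: "(b::real^2) \<bullet> (A *v b) = A$1$1*(b$1)^2 + (A$1$2 + A$2$1)*(b$1*b$2) + A$2$2*(b$2)^2"
  by (simp add: inner_vec_def matrix_vector_mult_def sum_2 power2_eq_square algebra_simps)

lemma tmult_entry: "(transpose A ** B)$i$j = column i A \<bullet> column j B"
  by (simp add: matrix_matrix_mult_def transpose_def column_def inner_vec_def mult.commute)

lemma column_jac: "column j (jac f q) = du f j q"
  by (simp add: column_def jac_def matrix_def du_def)

lemma kI_entries: "kI \<Omega> q $1$1 = kE \<Omega> q" "kI \<Omega> q $1$2 = kF \<Omega> q" "kI \<Omega> q $2$1 = kF \<Omega> q" "kI \<Omega> q $2$2 = kG \<Omega> q"
  by (simp_all add: kI_def tmult_entry kE_def kF_def kG_def w1_def w2_def inner_commute)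

lemma kII_entries: "kII \<Omega> x q $1$1 = kL \<Omega> x q" "kII \<Omega> x q $1$2 = kM1 \<Omega> x q"
   "kII \<Omega> x q $2$1 = kM2 \<Omega> x q" "kII \<Omega> x q $2$2 = kN \<Omega> x q"
  by (simp_all add: kII_def tmult_entry column_jac kL_def kM1_def kM2_def kN_def w1_def w2_def inner_commute)

lemma vec2_eq: "vector [c$1, c$2] = (c::real^2)"
  by (simp add: vec_eq_iff forall_2)

lemma vec2_nz: "(c::real^2) \<noteq> 0 \<longleftrightarrow> c$1 \<noteq> 0 \<or> c$2 \<noteq> 0"
  by (simp add: vec_eq_iff forall_2)

lemma part2_alg:
  fixes II D IM :: "real^2^2" and u :: "real^2"
  defines "A \<equiv> II ** adj2 (transpose D)" and "b \<equiv> transpose D *v u"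
  assumes "IM$2$1 = IM$1$2"
  shows "(2 * IM$1$2 * (D$2$2 * II$1$1 - D$1$2 * II$1$2)
     - IM$1$1 * (D$1$1 * II$1$2 - D$2$1 * II$1$1 + D$2$2 * II$2$1 - D$1$2 * II$2$2)) * (b$1)^2
   + (2 * IM$2$2 * (D$2$2 * II$1$1 - D$1$2 * II$1$2)
     - 2 * IM$1$1 * (D$1$1 * II$2$2 - D$2$1 * II$2$1)) * (b$1*b$2)
   + (IM$2$2 * (D$1$1 * II$1$2 - D$2$1 * II$1$1 + D$2$2 * II$2$1 - D$1$2 * II$2$2)
     - 2 * IM$1$2 * (D$1$1 * II$2$2 - D$2$1 * II$2$1)) * (b$2)^2
   = 2 * (u \<bullet> ((D ** Pmat ** transpose (adj2 II) ** D ** IM ** transpose D) *v u))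
     + (A$1$2 - A$2$1) * (b \<bullet> (IM *v b))"
  using assms(3)
  unfolding A_def b_def
  by (simp add: inner_vec_def matrix_vector_mult_def matrix_matrix_mult_def sum_2 adj2_def Pmat_def
      transpose_def power2_eq_square algebra_simps)


lemma A_entries:
  fixes II D :: "real^2^2"
  shows "(II ** adj2 (transpose D))$1$1 = II$1$1*D$2$2 - II$1$2*D$1$2"
    "(II ** adj2 (transpose D))$1$2 = II$1$2*D$1$1 - II$1$1*D$2$1"
    "(II ** adj2 (transpose D))$2$1 = II$2$1*D$2$2 - II$2$2*D$1$2"
    "(II ** adj2 (transpose D))$2$2 = II$2$2*D$1$1 - II$2$1*D$2$1"
  by (simp_all add: matrix_matrix_mult_def sum_2 adj2_def transpose_def algebra_simps)

lemma all2: "(\<forall>c::real^2. c \<noteq> 0 \<longrightarrow> P (c$1) (c$2)) \<longleftrightarrow> (\<forall>c1 c2. (c1 \<noteq> 0 \<or> c2 \<noteq> 0) \<longrightarrow> P c1 c2)"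
proof
  assume H: "\<forall>c::real^2. c \<noteq> 0 \<longrightarrow> P (c$1) (c$2)"
  show "\<forall>c1 c2. (c1 \<noteq> 0 \<or> c2 \<noteq> 0) \<longrightarrow> P c1 c2"
  proof (intro allI impI)
    fix c1 c2 :: real assume "c1 \<noteq> 0 \<or> c2 \<noteq> 0"
    then have "vector [c1, c2] \<noteq> (0::real^2)" by (simp add: vec2_nz)
    then show "P c1 c2" using H by fastforce
  qed
next
  assume H: "\<forall>c1 c2. (c1 \<noteq> 0 \<or> c2 \<noteq> 0) \<longrightarrow> P c1 c2"
  show "\<forall>c::real^2. c \<noteq> 0 \<longrightarrow> P (c$1) (c$2)" using H by (simp add: vec2_nz)
qed

lemma dir_iff:
  assumes indep: "\<forall>c1 c2. c1 *\<^sub>R w1 \<Omega> q + c2 *\<^sub>R w2 \<Omega> q = 0 \<longrightarrow> c1 = 0 \<and> c2 = 0"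
    and bnz: "b \<noteq> 0"
  shows "kummer_principal_direction \<Omega> \<Delta> x q b \<longleftrightarrow> principal_eq \<Omega> \<Delta> x q b = 0"
proof -
  define A where "A = kII \<Omega> x q ** adj2 (transpose (\<Delta> q))"
  define a where "a = A$1$1"
  define h where "h = A$1$2 + A$2$1"
  define d where "d = A$2$2"
  define E where "E = kE \<Omega> q"
  define F where "F = kF \<Omega> q"
  define G where "G = kG \<Omega> q"
  define Q where "Q = (\<lambda>c1 c2::real. a*c1^2 + h*c1*c2 + d*c2^2)"
  define R where "R = (\<lambda>c1 c2::real. E*c1^2 + 2*F*c1*c2 + G*c2^2)"
  have Kc: "kummerK \<Omega> \<Delta> x q c = Q (c$1) (c$2) / R (c$1) (c$2)" for c
    unfolding kummerK_def A_def[symmetric] quad2 kI_entries Q_def R_def a_def h_def d_def E_def F_def G_def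
    by (simp add: algebra_simps)
  have pos: "R c1 c2 > 0" if "c1 \<noteq> 0 \<or> c2 \<noteq> 0" for c1 c2
  proof -
    have "R c1 c2 = (c1 *\<^sub>R w1 \<Omega> q + c2 *\<^sub>R w2 \<Omega> q) \<bullet> (c1 *\<^sub>R w1 \<Omega> q + c2 *\<^sub>R w2 \<Omega> q)"
      unfolding R_def E_def F_def G_def kE_def kF_def kG_def
      by (simp add: inner_add_left inner_add_right inner_commute power2_eq_square algebra_simps)
    moreover have "c1 *\<^sub>R w1 \<Omega> q + c2 *\<^sub>R w2 \<Omega> q \<noteq> 0" using indep that by blast
    ultimately show ?thesis by simp
  qed
  have pe: "principal_eq \<Omega> \<Delta> x q b = (2*F*a - E*h)*(b$1)^2 + (2*G*a - 2*E*d)*(b$1*b$2) + (G*h - 2*F*d)*(b$2)^2"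
    unfolding principal_eq_def C1_def C2_def C3_def a_def h_def d_def A_def E_def F_def G_def
    unfolding A_entries kII_entries by (simp add: algebra_simps)
  have "kummer_principal_direction \<Omega> \<Delta> x q b \<longleftrightarrow>
     ((\<forall>c1 c2. (c1 \<noteq> 0 \<or> c2 \<noteq> 0) \<longrightarrow> Q c1 c2 / R c1 c2 \<le> Q (b$1) (b$2) / R (b$1) (b$2)) \<or>
      (\<forall>c1 c2. (c1 \<noteq> 0 \<or> c2 \<noteq> 0) \<longrightarrow> Q (b$1) (b$2) / R (b$1) (b$2) \<le> Q c1 c2 / R c1 c2))"
    unfolding kummer_principal_direction_def Kc
    using bnz all2[of "\<lambda>c1 c2. Q c1 c2 / R c1 c2 \<le> Q (b$1) (b$2) / R (b$1) (b$2)"]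
      all2[of "\<lambda>c1 c2. Q (b$1) (b$2) / R (b$1) (b$2) \<le> Q c1 c2 / R c1 c2"]
    by simp
  also have "\<dots> \<longleftrightarrow> principal_eq \<Omega> \<Delta> x q b = 0"
    unfolding pe Q_def R_def
    by (rule key_real[of E F G "b$1" "b$2" a h d, OF _ bnz[unfolded vec2_nz]])
       (use pos in \<open>simp add: R_def\<close>)
  finally show ?thesis .
qed

theorem proposition4p4:
  fixes U :: "(real^2) set" and x \<xi> :: "real^2 \<Rightarrow> real^3"
    and \<Omega> :: "real^2 \<Rightarrow> real^2^3" and \<Delta> :: "real^2 \<Rightarrow> real^2^2"
  assumes "open U"
    and "line_congruence U x \<xi>"
    and "tangent_moving_basis U \<xi> \<Omega>"
    and "\<forall>q\<in>U. jac \<xi> q = \<Omega> q ** transpose (\<Delta> q)"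
  shows "(\<forall>(J::real set) (\<alpha>::real \<Rightarrow> real^2).
            is_interval J \<and> open J \<and> smooth_on J \<alpha> \<and> \<alpha> ` J \<subseteq> U \<longrightarrow>
            (kummer_principal_line \<Omega> \<Delta> x J \<alpha> \<longleftrightarrow>
             (\<forall>t\<in>J. principal_eq \<Omega> \<Delta> x (\<alpha> t)
                        (transpose (\<Delta> (\<alpha> t)) *v vector_derivative \<alpha> (at t)) = 0)))
       \<and> (normal_congruence U \<Omega> \<Delta> x \<longrightarrow>
            (\<forall>q\<in>U. \<forall>u::real^2.
               principal_eq \<Omega> \<Delta> x q (transpose (\<Delta> q) *v u) = 0 \<longleftrightarrow>
               u \<bullet> ((\<Delta> q ** Pmat ** transpose (adj2 (kII \<Omega> x q)) ** \<Delta> q ** kI \<Omega> q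
                       ** transpose (\<Delta> q)) *v u) = 0))"
proof (intro conjI allI impI)
  have indep: "\<forall>c1 c2. c1 *\<^sub>R w1 \<Omega> q + c2 *\<^sub>R w2 \<Omega> q = 0 \<longrightarrow> c1 = 0 \<and> c2 = 0" if "q \<in> U" for q
    using assms(3) that unfolding tangent_moving_basis_def by blast
  have pe0: "principal_eq \<Omega> \<Delta> x q 0 = 0" for q by (simp add: principal_eq_def)
  fix J :: "real set" and \<alpha> :: "real \<Rightarrow> real^2"
  assume H: "is_interval J \<and> open J \<and> smooth_on J \<alpha> \<and> \<alpha> ` J \<subseteq> U"
  have pt: "(transpose (\<Delta> (\<alpha> t)) *v vector_derivative \<alpha> (at t) \<noteq> 0 \<longrightarrow>
        kummer_principal_direction \<Omega> \<Delta> x (\<alpha> t) (transpose (\<Delta> (\<alpha> t)) *v vector_derivative \<alpha> (at t)))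
     \<longleftrightarrow> principal_eq \<Omega> \<Delta> x (\<alpha> t) (transpose (\<Delta> (\<alpha> t)) *v vector_derivative \<alpha> (at t)) = 0"
    if "t \<in> J" for t
  proof -
    have "\<alpha> t \<in> U" using H that by blast
    show ?thesis
    proof (cases "transpose (\<Delta> (\<alpha> t)) *v vector_derivative \<alpha> (at t) = 0")
      case True then show ?thesis using pe0 by simp
    next
      case False then show ?thesis using dir_iff[OF indep[OF \<open>\<alpha> t \<in> U\<close>] False] by simp
    qed
  qed
  show "kummer_principal_line \<Omega> \<Delta> x J \<alpha> \<longleftrightarrow>
             (\<forall>t\<in>J. principal_eq \<Omega> \<Delta> x (\<alpha> t)
                        (transpose (\<Delta> (\<alpha> t)) *v vector_derivative \<alpha> (at t)) = 0)"
    unfolding kummer_principal_line_def using pt by blast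
next
  assume N: "normal_congruence U \<Omega> \<Delta> x"
  show "\<forall>q\<in>U. \<forall>u::real^2.
               principal_eq \<Omega> \<Delta> x q (transpose (\<Delta> q) *v u) = 0 \<longleftrightarrow>
               u \<bullet> ((\<Delta> q ** Pmat ** transpose (adj2 (kII \<Omega> x q)) ** \<Delta> q ** kI \<Omega> q
                       ** transpose (\<Delta> q)) *v u) = 0"
  proof (intro ballI allI)
    fix q u assume "q \<in> U"
    define A where "A = kII \<Omega> x q ** adj2 (transpose (\<Delta> q))"
    have "transpose A = A" using N \<open>q \<in> U\<close> unfolding normal_congruence_def A_def by blast
    then have "(transpose A)$2$1 = A$2$1" by simp
    then have sym: "A$1$2 = A$2$1" by (simp add: transpose_def)
    have eq: "principal_eq \<Omega> \<Delta> x q (transpose (\<Delta> q) *v u) =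
       2 * (u \<bullet> ((\<Delta> q ** Pmat ** transpose (adj2 (kII \<Omega> x q)) ** \<Delta> q ** kI \<Omega> q
                       ** transpose (\<Delta> q)) *v u))
     + (A$1$2 - A$2$1) * ((transpose (\<Delta> q) *v u) \<bullet> (kI \<Omega> q *v (transpose (\<Delta> q) *v u)))"
    proof -
      have a: "kI \<Omega> q $2$1 = kI \<Omega> q $1$2" by (simp add: kI_entries)
      note P = part2_alg[of "kI \<Omega> q" "\<Delta> q" "kII \<Omega> x q" u, OF a]
      show ?thesis
        using P unfolding A_def principal_eq_def C1_def C2_def C3_def kI_entries kII_entries
        by (simp only: mult.assoc)
    qed
    show "principal_eq \<Omega> \<Delta> x q (transpose (\<Delta> q) *v u) = 0 \<longleftrightarrow>
               u \<bullet> ((\<Delta> q ** Pmat ** transpose (adj2 (kII \<Omega> x q)) ** \<Delta> q ** kI \<Omega> q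
                       ** transpose (\<Delta> q)) *v u) = 0"
      using eq sym by simp
  qed
qed

end
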